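(* Let $(N_0,c,w,P)$ be an RS-situation and $(N_0,v)$ the corresponding RS-game. Then \[Core(N_0,v)=\Big\{x\in\mathbb{R}^{N_0}\ \Big|\ \sum_{i\in N_0}x_i=v(N_0);\ x_i\le v(\{0,i\})\text{ for all } i\in N;\ \sum_{i\in S}x_i\ge v(S)\text{ for all } S\subseteq N\Big\}.\]
   Context: Let $c\in\mathbb{R}$. An RS-problem is a triple $(c,w,p)$ where $w:\mathbb{R}_+\to(c,+\infty)$ is decreasing (non-increasing) and continuous, and $p:\mathbb{R}_+\to\mathbb{R}$ is decreasing (non-increasing) and continuous, satisfies $p(0)>w(0)$, and there exists $q>0$ with $p(q)=c$. An RS-situation is a tuple $(N_0,c,w,P)$ where $N=\{1,\dots,n\}$ is the set of retailers, $0$ denotes the supplier, $N_0=N\cup\{0\}$, $P=(p_1,\dots,p_n)$, and $(c,w,p_i)$ is an RS-problem for each $i\in N$. For $S\subseteq N$ write $S_0=S\cup\{0\}$. For $q\ge0$ and $\omega\in\mathbb{R}$, $\Pi_i^{ret}(q;\omega)=(p_i(q)-\omega)q$. For nonempty $S\subseteq N$, $(q_i^S)_{i\in S}$ is a fixed optimal solution of: maximize $\sum_{i\in S}(p_i(q_i)-w(q_S))q_i$ over $q\in\mathbb{R}_+^{S}$ subject to $p_i(q_i)\ge w(q_S)$ for all $i\in S$, where $q_S=\sum_{i\in S}q_i$; $q_S^S=\sum_{i\in S}q_i^S$. For $i\in N$, $q_i^c$ is a fixed optimal solution of: maximize $(p_i(q)-c)q$ over $q\ge0$ subject to $p_i(q)\ge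 c$. The corresponding RS-game $(N_0,v)$ is the TU game on $N_0$ with $v(\emptyset)=0$ and, for all $S\subseteq N$, $v(S)=\sum_{i\in S}\Pi_i^{ret}(q_i^S;w(q_S^S))$ and $v(S_0)=\sum_{i\in S}\Pi_i^{ret}(q_i^c;c)$. The core of a TU game $(N_0,v)$ is $Core(N_0,v)=\{x\in\mathbb{R}^{N_0}: \sum_{i\in N_0}x_i=v(N_0),\ \sum_{i\in T}x_i\ge v(T)\text{ for all }T\subset N_0\}$. *)

theory Defs
  imports Complex_Main
begin

text \<open>Players are natural numbers: supplier 0, retailers 1..n. Payoff vectors are
  functions nat \<Rightarrow> real (only values on the player set matter).\<close>

definition rs_problem :: "real \<Rightarrow> (real \<Rightarrow> real) \<Rightarrow> (real \<Rightarrow> real) \<Rightarrow> bool" where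
  "rs_problem c w p \<longleftrightarrow>
     (\<forall>q\<ge>0. w q > c) \<and>
     (\<forall>x y. 0 \<le> x \<longrightarrow> x \<le> y \<longrightarrow> w y \<le> w x) \<and>
     continuous_on {0..} w \<and>
     (\<forall>x y. 0 \<le> x \<longrightarrow> x \<le> y \<longrightarrow> p y \<le> p x) \<and>
     continuous_on {0..} p \<and>
     p 0 > w 0 \<and>
     (\<exists>q>0. p q = c)"

definition rs_situation :: "nat \<Rightarrow> real \<Rightarrow> (real \<Rightarrow> real) \<Rightarrow> (nat \<Rightarrow> real \<Rightarrow> real) \<Rightarrow> bool" where
  "rs_situation n c w P \<longleftrightarrow> (\<forall>i\<in>{1..n}. rs_problem c w (P i))"

definition retailer_profit :: "(real \<Rightarrow> real) \<Rightarrow> real \<Rightarrow> real \<Rightarrow> real" where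
  "retailer_profit p q \<omega> = (p q - \<omega>) * q"

definition coal_feasible :: "(real \<Rightarrow> real) \<Rightarrow> (nat \<Rightarrow> real \<Rightarrow> real) \<Rightarrow> nat set \<Rightarrow> (nat \<Rightarrow> real) \<Rightarrow> bool" where
  "coal_feasible w P S q \<longleftrightarrow> (\<forall>i\<in>S. 0 \<le> q i \<and> P i (q i) \<ge> w (\<Sum>j\<in>S. q j))"

definition coal_obj :: "(real \<Rightarrow> real) \<Rightarrow> (nat \<Rightarrow> real \<Rightarrow> real) \<Rightarrow> nat set \<Rightarrow> (nat \<Rightarrow> real) \<Rightarrow> real" where
  "coal_obj w P S q = (\<Sum>i\<in>S. (P i (q i) - w (\<Sum>j\<in>S. q j)) * q i)"

definition coal_optimal :: "(real \<Rightarrow> real) \<Rightarrow> (nat \<Rightarrow> real \<Rightarrow> real) \<Rightarrow> nat set \<Rightarrow> (nat \<Rightarrow> real) \<Rightarrow> bool" where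
  "coal_optimal w P S q \<longleftrightarrow> coal_feasible w P S q \<and>
     (\<forall>q'. coal_feasible w P S q' \<longrightarrow> coal_obj w P S q' \<le> coal_obj w P S q)"

definition comp_optimal :: "real \<Rightarrow> (real \<Rightarrow> real) \<Rightarrow> real \<Rightarrow> bool" where
  "comp_optimal c p q \<longleftrightarrow> 0 \<le> q \<and> p q \<ge> c \<and>
     (\<forall>q'. 0 \<le> q' \<and> p q' \<ge> c \<longrightarrow> (p q' - c) * q' \<le> (p q - c) * q)"

text \<open>RS-game: qS S is the fixed optimal solution for coalition S of retailers,
  qc i the fixed optimal quantity of retailer i under price c.\<close>
definition rs_game :: "real \<Rightarrow> (real \<Rightarrow> real) \<Rightarrow> (nat \<Rightarrow> real \<Rightarrow> real) \<Rightarrow>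
    (nat set \<Rightarrow> nat \<Rightarrow> real) \<Rightarrow> (nat \<Rightarrow> real) \<Rightarrow> nat set \<Rightarrow> real" where
  "rs_game c w P qS qc T =
     (if 0 \<in> T then (\<Sum>i\<in>T - {0}. retailer_profit (P i) (qc i) c)
      else (\<Sum>i\<in>T. retailer_profit (P i) (qS T i) (w (\<Sum>j\<in>T. qS T j))))"

definition core :: "nat set \<Rightarrow> (nat set \<Rightarrow> real) \<Rightarrow> (nat \<Rightarrow> real) set" where
  "core N0 v = {x. (\<Sum>i\<in>N0. x i) = v N0 \<and> (\<forall>T. T \<subset> N0 \<longrightarrow> (\<Sum>i\<in>T. x i) \<ge> v T)}"

end

theory Submission
  imports Defs
begin

theorem theorem5p1:
  fixes n :: nat and c :: real and w :: "real \<Rightarrow> real" and P :: "nat \<Rightarrow> real \<Rightarrow> real"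
    and qS :: "nat set \<Rightarrow> nat \<Rightarrow> real" and qc :: "nat \<Rightarrow> real"
  assumes "rs_situation n c w P"
    and "\<And>S. S \<subseteq> {1..n} \<Longrightarrow> S \<noteq> {} \<Longrightarrow> coal_optimal w P S (qS S)"
    and "\<And>i. i \<in> {1..n} \<Longrightarrow> comp_optimal c (P i) (qc i)"
  shows "core {0..n} (rs_game c w P qS qc) =
    {x. (\<Sum>i\<in>{0..n}. x i) = rs_game c w P qS qc {0..n} \<and>
        (\<forall>i\<in>{1..n}. x i \<le> rs_game c w P qS qc {0, i}) \<and>
        (\<forall>S. S \<subseteq> {1..n} \<longrightarrow> (\<Sum>i\<in>S. x i) \<ge> rs_game c w P qS qc S)}"
proof -
  define a where "a i = retailer_profit (P i) (qc i) c" for i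
  define v where "v = rs_game c w P qS qc"
  have v0: "v T = (\<Sum>i\<in>T - {0}. a i)" if "0 \<in> T" for T
    using that unfolding v_def rs_game_def a_def by simp
  have vN: "v {0..n} = (\<Sum>i\<in>{1..n}. a i)"
  proof -
    have "{0..n} - {0} = {1..n}" by auto
    then show ?thesis using v0[of "{0..n}"] by simp
  qed
  have vi: "v {0, i} = a i" if "i \<in> {1..n}" for i
  proof -
    have "{0, i} - {0} = {i}" using that by auto
    then show ?thesis using v0[of "{0,i}"] by simp
  qed
  show ?thesis unfolding v_def[symmetric]
  proof (intro equalityI subsetI)
    fix x assume "x \<in> core {0..n} v"
    then have xc: "(\<Sum>i\<in>{0..n}. x i) = v {0..n} \<and> (\<forall>T. T \<subset> {0..n} \<longrightarrow> (\<Sum>i\<in>T. x i) \<ge> v T)"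
      unfolding core_def by (rule CollectD)
    then have tot: "(\<Sum>i\<in>{0..n}. x i) = v {0..n}" by (rule conjunct1)
    have co: "(\<Sum>i\<in>T. x i) \<ge> v T" if "T \<subset> {0..n}" for T
      using xc[THEN conjunct2, rule_format, OF that] .
    have A: "x i \<le> v {0, i}" if i: "i \<in> {1..n}" for i
    proof -
      let ?T = "{0..n} - {i}"
      have i0: "i \<in> {0..n}" using i by simp
      have "?T \<subset> {0..n}"
      proof (rule psubsetI)
        show "?T \<subseteq> {0..n}" by (rule Diff_subset)
        show "?T \<noteq> {0..n}" using i0 by blast
      qed
      then have "(\<Sum>j\<in>?T. x j) \<ge> v ?T" by (rule co)
      moreover have "v ?T = (\<Sum>j\<in>{1..n} - {i}. a j)"
      proof -
        have "?T - {0} = {1..n} - {i}" by auto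
        moreover have "0 \<in> ?T" using i by auto
        ultimately show ?thesis using v0[of ?T] by simp
      qed
      moreover have "(\<Sum>j\<in>{0..n}. x j) = x i + (\<Sum>j\<in>?T. x j)"
        by (rule sum.remove) (use i in auto)
      moreover have "(\<Sum>j\<in>{1..n}. a j) = a i + (\<Sum>j\<in>{1..n} - {i}. a j)"
        by (rule sum.remove) (use i in auto)
      ultimately show ?thesis using tot vN vi[OF i] by linarith
    qed
    have B: "(\<Sum>i\<in>S. x i) \<ge> v S" if "S \<subseteq> {1..n}" for S
    proof -
      have "S \<subset> {0..n}" using that by auto
      then show ?thesis by (rule co)
    qed
    show "x \<in> {x. (\<Sum>i\<in>{0..n}. x i) = v {0..n} \<and>
        (\<forall>i\<in>{1..n}. x i \<le> v {0, i}) \<and>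
        (\<forall>S. S \<subseteq> {1..n} \<longrightarrow> (\<Sum>i\<in>S. x i) \<ge> v S)}"
      using tot A B by blast
  next
    fix x assume "x \<in> {x. (\<Sum>i\<in>{0..n}. x i) = v {0..n} \<and>
        (\<forall>i\<in>{1..n}. x i \<le> v {0, i}) \<and>
        (\<forall>S. S \<subseteq> {1..n} \<longrightarrow> (\<Sum>i\<in>S. x i) \<ge> v S)}"
    then have tot: "(\<Sum>i\<in>{0..n}. x i) = v {0..n}"
      and up: "\<And>i. i \<in> {1..n} \<Longrightarrow> x i \<le> a i"
      and lo: "\<And>S. S \<subseteq> {1..n} \<Longrightarrow> (\<Sum>i\<in>S. x i) \<ge> v S"
      using vi by (simp_all add: Ball_def)
    have "(\<Sum>i\<in>T. x i) \<ge> v T" if T: "T \<subset> {0..n}" for T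
    proof (cases "0 \<in> T")
      case False
      have "T \<subseteq> {1..n}"
      proof
        fix j assume j: "j \<in> T"
        have "j \<in> {0..n}" using T j by blast
        moreover have "j \<noteq> 0" using False j by metis
        ultimately show "j \<in> {1..n}" by simp
      qed
      then show ?thesis by (rule lo)
    next
      case True
      let ?S = "T - {0}"
      let ?R = "{1..n} - ?S"
      have fT: "finite T" using T finite_subset by blast
      have "{0..n} = T \<union> ?R"
      proof (rule set_eqI)
        fix j show "j \<in> {0..n} \<longleftrightarrow> j \<in> T \<union> ?R"
          using T True by (cases "j = 0") auto
      qed
      moreover have "T \<inter> ?R = {}" by auto
      ultimately have s1: "(\<Sum>i\<in>{0..n}. x i) = (\<Sum>i\<in>T. x i) + (\<Sum>i\<in>?R. x i)"
        using fT by (metis finite_Diff finite_atLeastAtMost sum.union_disjoint)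
      have s2: "(\<Sum>i\<in>?R. x i) \<le> (\<Sum>i\<in>?R. a i)"
        by (rule sum_mono) (auto intro: up)
      have "{1..n} = ?S \<union> ?R" using T by auto
      moreover have "?S \<inter> ?R = {}" by auto
      ultimately have s3: "(\<Sum>i\<in>{1..n}. a i) = (\<Sum>i\<in>?S. a i) + (\<Sum>i\<in>?R. a i)"
        using fT by (metis finite_Diff finite_atLeastAtMost sum.union_disjoint)
      show ?thesis using s1 s2 s3 tot vN v0[OF True] by linarith
    qed
    then show "x \<in> core {0..n} v" unfolding core_def mem_Collect_eq using tot by blast
  qed
qed

end
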